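(* Let $n,d,a$ be positive integers and $g:=\gcd(d,n)$. If $g\nmid a$, then the triple $(n,d,a)$ is bad.
   Context: Let $R=\mathbb{C}[x_1,\dots,x_n]$ with $\mathfrak{S}_n$ permuting the variables and $R_a^{\mathfrak{S}_n}$ the symmetric polynomials homogeneous of degree $a$. A triple $(n,d,a)$ of positive integers is good if there exists $f\in R_a^{\mathfrak{S}_n}$ such that $x_1^d-x_n^d,\dots,x_{n-1}^d-x_n^d,f$ is a regular sequence (equivalently, $f$ has no zero on $\mathcal{V}_d=\{(z_1,\dots,z_n)\in\mathbb{C}^n: z_i^d=1\ \forall i,\ z_n=1\}$); otherwise it is bad. *)

theory Defs
  imports Complex_Main "HOL-Combinatorics.Permutations"
begin

text \<open>Polynomials in the variables x_0,...,x_(n-1) (0-based indexing of x_1..x_n).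
  A homogeneous polynomial of degree a is given by a coefficient function on exponent
  vectors; only exponent vectors in hmonos n a matter.\<close>

definition hmonos :: "nat \<Rightarrow> nat \<Rightarrow> (nat \<Rightarrow> nat) set" where
  "hmonos n a = {\<alpha>. (\<forall>i\<ge>n. \<alpha> i = 0) \<and> (\<Sum>i<n. \<alpha> i) = a}"

definition hom_eval :: "nat \<Rightarrow> nat \<Rightarrow> ((nat \<Rightarrow> nat) \<Rightarrow> complex) \<Rightarrow> (nat \<Rightarrow> complex) \<Rightarrow> complex" where
  "hom_eval n a c z = (\<Sum>\<alpha>\<in>hmonos n a. c \<alpha> * (\<Prod>i<n. z i ^ \<alpha> i))"

definition sym_coeffs :: "nat \<Rightarrow> nat \<Rightarrow> ((nat \<Rightarrow> nat) \<Rightarrow> complex) \<Rightarrow> bool" where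
  "sym_coeffs n a c \<longleftrightarrow> (\<forall>\<sigma>. \<sigma> permutes {..<n} \<longrightarrow> (\<forall>\<alpha>\<in>hmonos n a. c (\<alpha> \<circ> \<sigma>) = c \<alpha>))"

text \<open>V_d = {z : z_i^d = 1 for all i, z_n = 1} (last variable is index n-1).\<close>
definition Vset :: "nat \<Rightarrow> nat \<Rightarrow> (nat \<Rightarrow> complex) set" where
  "Vset n d = {z. (\<forall>i<n. z i ^ d = 1) \<and> z (n - 1) = 1}"

definition good_triple :: "nat \<Rightarrow> nat \<Rightarrow> nat \<Rightarrow> bool" where
  "good_triple n d a \<longleftrightarrow>
     (\<exists>c. sym_coeffs n a c \<and> (\<forall>z\<in>Vset n d. hom_eval n a c z \<noteq> 0))"

definition bad_triple :: "nat \<Rightarrow> nat \<Rightarrow> nat \<Rightarrow> bool" where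
  "bad_triple n d a \<longleftrightarrow> \<not> good_triple n d a"

end

theory Submission
  imports Defs "HOL-Analysis.Analysis"
begin

lemma root_pow_eq_1:
  fixes g k :: nat
  assumes g: "0 < g"
  shows "exp (2 * pi * \<i> / of_nat g) ^ k = 1 \<longleftrightarrow> g dvd k"
proof -
  have e: "exp (2 * pi * \<i> / of_nat g) ^ k = exp (Complex 0 (2 * pi * real k / real g))"
  proof -
    have "of_nat k * (2 * pi * \<i> / of_nat g) = Complex 0 (2 * pi * real k / real g)"
      by (simp add: complex_eq_iff)
    then show ?thesis by (metis exp_of_nat_mult)
  qed
  show ?thesis
  proof
    assume "exp (2 * pi * \<i> / of_nat g) ^ k = 1"
    then obtain m :: int where m: "2 * pi * real k / real g = of_int (2 * m) * pi"
      unfolding e exp_eq_1 by auto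
    then have "real k = real g * of_int m" using g by (simp add: field_simps)
    then have "int k = int g * m" by (metis of_int_eq_iff of_int_mult of_int_of_nat_eq)
    then have "int g dvd int k" by simp
    then show "g dvd k" by simp
  next
    assume "g dvd k"
    then obtain m where "k = g * m" by blast
    then have "2 * pi * real k / real g = of_int (2 * int m) * pi" using g by simp
    then show "exp (2 * pi * \<i> / of_nat g) ^ k = 1"
      unfolding e exp_eq_1 by (metis complex.sel(1) complex.sel(2))
  qed
qed

definition rot :: "nat \<Rightarrow> nat \<Rightarrow> nat" where
  "rot n i = (if i < n then Suc i mod n else i)"

lemma rot_permutes:
  assumes "0 < n"
  shows "rot n permutes {..<n}"
proof (rule bij_imp_permutes)
  have inj: "inj_on (rot n) {..<n}"
  proof (rule inj_onI)
    fix x y assume x: "x \<in> {..<n}" and y: "y \<in> {..<n}" and e: "rot n x = rot n y"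
    then have "Suc x mod n = Suc y mod n" by (simp add: rot_def)
    with x y show "x = y"
      by (auto simp: mod_Suc split: if_splits)
  qed
  have sub: "rot n ` {..<n} \<subseteq> {..<n}" using assms by (auto simp: rot_def)
  show "bij_betw (rot n) {..<n} {..<n}"
    using inj sub by (simp add: bij_betw_def endo_inj_surj)
  show "\<And>x. x \<notin> {..<n} \<Longrightarrow> rot n x = x" by (simp add: rot_def)
qed

theorem proposition3p15:
  fixes n d a :: nat
  assumes "0 < n" and "0 < d" and "0 < a"
    and "\<not> gcd d n dvd a"
  shows "bad_triple n d a"
proof -
  define g where "g = gcd d n"
  have g0: "0 < g" using assms(1) by (simp add: g_def)
  have gd: "g dvd d" "g dvd n" by (simp_all add: g_def)
  define \<zeta> where "\<zeta> = exp (2 * pi * \<i> / of_nat g)"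
  have zp: "\<And>k. \<zeta> ^ k = 1 \<longleftrightarrow> g dvd k" unfolding \<zeta>_def using root_pow_eq_1[OF g0] by blast
  have za: "\<zeta> ^ a \<noteq> 1" using zp assms(4) g_def by blast
  define z where "z = (\<lambda>i. \<zeta> ^ Suc i)"
  have zV: "z \<in> Vset n d"
  proof -
    have "\<forall>i<n. z i ^ d = 1"
    proof (intro allI impI)
      fix i
      have "z i ^ d = \<zeta> ^ (Suc i * d)" unfolding z_def by (rule power_mult[symmetric])
      also have "\<dots> = 1" using gd(1) zp by simp
      finally show "z i ^ d = 1" .
    qed
    moreover have "z (n - 1) = 1"
    proof -
      have "Suc (n - 1) = n" using assms(1) by simp
      then have "z (n - 1) = \<zeta> ^ n" by (simp add: z_def del: power_Suc)
      then show ?thesis using gd(2) zp by simp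
    qed
    ultimately show ?thesis by (simp add: Vset_def)
  qed
  have zrot: "\<And>i. i < n \<Longrightarrow> z (rot n i) = \<zeta> * z i"
  proof -
    fix i assume i: "i < n"
    have "\<zeta> ^ Suc (Suc i mod n) = \<zeta> ^ Suc (Suc i)"
    proof -
      have "Suc (Suc i) = Suc (Suc i mod n) + n * (Suc i div n)" by simp
      then have "\<zeta> ^ Suc (Suc i) = \<zeta> ^ Suc (Suc i mod n) * \<zeta> ^ (n * (Suc i div n))"
        by (metis power_add)
      moreover have "\<zeta> ^ (n * (Suc i div n)) = 1" using gd(2) zp by auto
      ultimately show ?thesis by (metis mult.right_neutral)
    qed
    then show "z (rot n i) = \<zeta> * z i" using i by (simp add: z_def rot_def)
  qed
  show ?thesis unfolding bad_triple_def good_triple_def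
  proof clarify
    fix c assume sym: "sym_coeffs n a c" and nz: "\<forall>z\<in>Vset n d. hom_eval n a c z \<noteq> 0"
    define \<sigma> where "\<sigma> = rot n"
    have perm: "\<sigma> permutes {..<n}" using rot_permutes[OF assms(1)] by (simp add: \<sigma>_def)
    have csym: "\<And>\<alpha>. \<alpha> \<in> hmonos n a \<Longrightarrow> c (\<alpha> \<circ> \<sigma>) = c \<alpha>"
      using sym perm by (simp add: sym_coeffs_def)
    have hm: "\<And>\<beta>. \<beta> \<in> hmonos n a \<Longrightarrow> \<beta> \<circ> \<sigma> \<in> hmonos n a"
    proof -
      fix \<beta> assume b: "\<beta> \<in> hmonos n a"
      have "(\<Sum>i<n. \<beta> (\<sigma> i)) = (\<Sum>i<n. \<beta> i)"
        using sum.permute[OF perm, of \<beta>] by (simp add: comp_def)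
      moreover have "\<forall>i\<ge>n. \<beta> (\<sigma> i) = 0" using b perm
        by (simp add: hmonos_def permutes_not_in)
      ultimately show "\<beta> \<circ> \<sigma> \<in> hmonos n a" using b by (simp add: hmonos_def)
    qed
    have injc: "inj_on (\<lambda>\<beta>. \<beta> \<circ> \<sigma>) (hmonos n a)"
    proof (rule inj_onI)
      fix x y assume "x \<circ> \<sigma> = y \<circ> \<sigma>"
      then have "x \<circ> \<sigma> \<circ> inv \<sigma> = y \<circ> \<sigma> \<circ> inv \<sigma>" by simp
      then show "x = y" using perm
        by (simp add: o_assoc[symmetric] permutes_inv_o(1))
    qed
    have imc: "(\<lambda>\<beta>. \<beta> \<circ> \<sigma>) ` hmonos n a = hmonos n a"
    proof
      show "(\<lambda>\<beta>. \<beta> \<circ> \<sigma>) ` hmonos n a \<subseteq> hmonos n a" using hm by auto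
      show "hmonos n a \<subseteq> (\<lambda>\<beta>. \<beta> \<circ> \<sigma>) ` hmonos n a"
      proof
        fix \<alpha> assume a: "\<alpha> \<in> hmonos n a"
        have ip: "inv \<sigma> permutes {..<n}" using perm by (rule permutes_inv)
        have "\<alpha> \<circ> inv \<sigma> \<in> hmonos n a"
        proof -
          have "(\<Sum>i<n. \<alpha> (inv \<sigma> i)) = (\<Sum>i<n. \<alpha> i)"
            using sum.permute[OF ip, of \<alpha>] by (simp add: comp_def)
          moreover have "\<forall>i\<ge>n. \<alpha> (inv \<sigma> i) = 0" using a ip
            by (simp add: hmonos_def permutes_not_in)
          ultimately show ?thesis using a by (simp add: hmonos_def)
        qed
        moreover have "\<alpha> = (\<alpha> \<circ> inv \<sigma>) \<circ> \<sigma>" using perm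
          by (simp add: o_assoc[symmetric] permutes_inv_o(2))
        ultimately show "\<alpha> \<in> (\<lambda>\<beta>. \<beta> \<circ> \<sigma>) ` hmonos n a" by blast
      qed
    qed
    have L: "hom_eval n a c (z \<circ> \<sigma>) = hom_eval n a c z"
    proof -
      have "hom_eval n a c (z \<circ> \<sigma>) = (\<Sum>\<beta>\<in>hmonos n a. c (\<beta> \<circ> \<sigma>) * (\<Prod>i<n. z (\<sigma> i) ^ (\<beta> \<circ> \<sigma>) i))"
        unfolding hom_eval_def
        by (subst sum.reindex_bij_betw[symmetric, where h="\<lambda>\<beta>. \<beta> \<circ> \<sigma>" and S="hmonos n a"])
           (use injc imc in \<open>auto simp: bij_betw_def\<close>)
      also have "\<dots> = (\<Sum>\<beta>\<in>hmonos n a. c \<beta> * (\<Prod>i<n. z i ^ \<beta> i))"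
      proof (rule sum.cong[OF refl])
        fix \<beta> assume b: "\<beta> \<in> hmonos n a"
        have "(\<Prod>i<n. z (\<sigma> i) ^ (\<beta> \<circ> \<sigma>) i) = (\<Prod>i<n. z i ^ \<beta> i)"
          using prod.permute[OF perm, of "\<lambda>i. z i ^ \<beta> i"] by (simp add: comp_def)
        then show "c (\<beta> \<circ> \<sigma>) * (\<Prod>i<n. z (\<sigma> i) ^ (\<beta> \<circ> \<sigma>) i) = c \<beta> * (\<Prod>i<n. z i ^ \<beta> i)"
          using csym[OF b] by simp
      qed
      finally show ?thesis unfolding hom_eval_def .
    qed
    have R: "hom_eval n a c (z \<circ> \<sigma>) = \<zeta> ^ a * hom_eval n a c z"
    proof -
      have "hom_eval n a c (z \<circ> \<sigma>) = (\<Sum>\<alpha>\<in>hmonos n a. c \<alpha> * (\<Prod>i<n. (\<zeta> * z i) ^ \<alpha> i))"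
        unfolding hom_eval_def
        by (rule sum.cong[OF refl], rule arg_cong[where f="\<lambda>x. _ * x"], rule prod.cong)
           (auto simp: \<sigma>_def zrot)
      also have "\<dots> = (\<Sum>\<alpha>\<in>hmonos n a. \<zeta> ^ a * (c \<alpha> * (\<Prod>i<n. z i ^ \<alpha> i)))"
      proof (rule sum.cong[OF refl])
        fix \<alpha> assume a: "\<alpha> \<in> hmonos n a"
        have "(\<Prod>i<n. (\<zeta> * z i) ^ \<alpha> i) = (\<Prod>i<n. \<zeta> ^ \<alpha> i) * (\<Prod>i<n. z i ^ \<alpha> i)"
          by (simp add: power_mult_distrib prod.distrib)
        also have "(\<Prod>i<n. \<zeta> ^ \<alpha> i) = \<zeta> ^ a"
          using a by (simp add: power_sum[symmetric] hmonos_def)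
        finally show "c \<alpha> * (\<Prod>i<n. (\<zeta> * z i) ^ \<alpha> i) = \<zeta> ^ a * (c \<alpha> * (\<Prod>i<n. z i ^ \<alpha> i))"
          by simp
      qed
      also have "\<dots> = \<zeta> ^ a * hom_eval n a c z"
        unfolding hom_eval_def by (simp add: sum_distrib_left)
      finally show ?thesis .
    qed
    have "(\<zeta> ^ a - 1) * hom_eval n a c z = 0" using L R by (simp add: algebra_simps)
    then have "hom_eval n a c z = 0" using za by simp
    then show False using nz zV by blast
  qed
qed

end
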